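(* Let $n$ be a positive integer. Then, modulo $\Phi_n(q)^2$, \[ \sum_{k=0}^{n-1}\frac{(q;q^2)_k^2(q^2;q^4)_k}{(q^2;q^2)_k^2(q^4;q^4)_k}\,q^{2k} \equiv q^{(n-1)/2}\frac{(q^2;q^4)_{(n-1)/4}^2}{(q^4;q^4)_{(n-1)/4}^2}\quad\text{if } n\equiv 1\pmod 4, \] and \[ \sum_{k=0}^{n-1}\frac{(q;q^2)_k^2(q^2;q^4)_k}{(q^2;q^2)_k^2(q^4;q^4)_k}\,q^{2k}\equiv 0\quad\text{if } n\equiv 3\pmod 4. \]
   Context: For an indeterminate $a$ and a nonnegative integer $k$, $(a;q)_k=\prod_{j=0}^{k-1}(1-aq^j)$, with $(a;q)_0=1$. $\Phi_n(q)=\prod_{1\le j\le n,\ \gcd(j,n)=1}(q-e^{2\pi i j/n})$ is the $n$-th cyclotomic polynomial. A congruence between rational functions in $q$ modulo a polynomial $P(q)$ means that the difference, written as a ratio of polynomials with denominator coprime to $P(q)$, has numerator divisible by $P(q)$. *)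

theory Defs
  imports Complex_Main "HOL-Computational_Algebra.Polynomial" "HOL-Computational_Algebra.Fraction_Field"
begin

type_synonym ratfun = "complex poly fract"

definition qvar :: ratfun where
  "qvar = Fract [:0, 1:] 1"

definition rf_of_poly :: "complex poly \<Rightarrow> ratfun" where
  "rf_of_poly p = Fract p 1"

definition qpoch :: "ratfun \<Rightarrow> ratfun \<Rightarrow> nat \<Rightarrow> ratfun" where
  "qpoch a q k = (\<Prod>j<k. 1 - a * q ^ j)"

definition cyclotomic :: "nat \<Rightarrow> complex poly" where
  "cyclotomic n = (\<Prod>j\<in>{j\<in>{1..n}. coprime j n}.
       [:- cis (2 * pi * real j / real n), 1:])"

definition rf_cong :: "ratfun \<Rightarrow> ratfun \<Rightarrow> complex poly \<Rightarrow> bool" where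
  "rf_cong x y P \<longleftrightarrow>
     (\<exists>N M. M \<noteq> 0 \<and> coprime M P \<and> P dvd N \<and> x - y = Fract N M)"

end

theory Submission
  imports Defs "HOL-Computational_Algebra.Computational_Algebra" "HOL-Computational_Algebra.Field_as_Ring"
begin



definition qp :: "'a::field \<Rightarrow> 'a \<Rightarrow> nat \<Rightarrow> 'a" where
  "qp a b k = (\<Prod>j<k. 1 - a * b ^ j)"

lemma qp_0[simp]: "qp a b 0 = 1" by (simp add: qp_def)
lemma qp_Suc: "qp a b (Suc k) = qp a b k * (1 - a * b ^ k)"
  by (simp add: qp_def)

lemma qp_shift: "(1 - a) * qp (a*p) p k = qp a p k * (1 - a*p^k)"
proof (induction k)
  case 0 then show ?case by simp
next
  case (Suc k)
  have "(1 - a) * qp (a*p) p (Suc k) = ((1 - a) * qp (a*p) p k) * (1 - a*p*p^k)"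
    by (simp add: qp_Suc mult.assoc)
  also have "\<dots> = qp a p k * (1 - a*p^k) * (1 - a*p*p^k)" using Suc by simp
  also have "\<dots> = qp a p (Suc k) * (1 - a*p^(Suc k))" by (simp add: qp_Suc mult_ac)
  finally show ?case .
qed

lemma qp_zero: "j < k \<Longrightarrow> a * b ^ j = 1 \<Longrightarrow> qp a b k = 0"
  unfolding qp_def by (rule prod_zero) auto

lemma qp_nonzero: "(\<And>j. j < k \<Longrightarrow> a * b ^ j \<noteq> 1) \<Longrightarrow> qp a b k \<noteq> 0"
  unfolding qp_def by (auto simp: prod_zero_iff)

lemma key_poly:
  fixes p u x :: "'a::field"
  shows "(-(p*(1-p*u)^2*(1-p^5*u^2))) * ((p^3*u-x)*(p^3*u-p*x)*(p^3*u-p^2*x))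
    + (p^5*u*(1-p^2*u)^2*(1-p^3*u^2)) * ((p^3*u-x)*(p^3*u-p*x)*(1-p*u*x))
    + (p^3*(1-p^2*u)^2*(1-p^5*u^2)) * ((p^3*u-x)*(1-p*u*x)*(1-p*u*p*x))
    + (-(p^5*u*(1-p^3*u)^2*(1-p^3*u^2))) * ((1-p*u*x)*(1-p*u*p*x)*(1-p*u*p^2*x))
    = p^3*((1-p^3*u^2)*(1-p^4*u^2)*(1-p^5*u^2)) *
       ((p^3*u-x)*(1-p*u*x)*(1-p*x^2) - p^2*u*(1-x)^2*(1-x^2))"
  by algebra

lemma comb_abs:
  fixes C :: "'a::field"
  assumes "F0*K0 = C*b0" "F1*K1 = C*b1" "F2*K2 = C*b2" "F3*K3 = C*b3"
  shows "(l0*K0)*F0 + (l1*K1)*F1 + (l2*K2)*F2 + (l3*K3)*F3 = C*(l0*b0 + l1*b1 + l2*b2 + l3*b3)"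
proof -
  have "(l0*K0)*F0 + (l1*K1)*F1 + (l2*K2)*F2 + (l3*K3)*F3 = l0*(F0*K0) + l1*(F1*K1) + l2*(F2*K2) + l3*(F3*K3)"
    by (simp add: mult_ac)
  also have "\<dots> = C*(l0*b0 + l1*b1 + l2*b2 + l3*b3)" unfolding assms by (simp add: algebra_simps)
  finally show ?thesis .
qed

definition gg :: "'a::field \<Rightarrow> nat \<Rightarrow> nat \<Rightarrow> 'a" where
  "gg p N j = (let u = p^N in
     if j = 0 then (-(p*(1-p*u)^2*(1-p^5*u^2))) * ((p^3*u-1)*(p^3*u-p)*(p^3*u-p^2))
     else if j = 1 then (p^5*u*(1-p^2*u)^2*(1-p^3*u^2)) * ((p^3*u-1)*(p^3*u-p)*(1-p*u))
     else if j = 2 then (p^3*(1-p^2*u)^2*(1-p^5*u^2)) * ((p^3*u-1)*(1-p*u)*(1-p*u*p))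
     else (-(p^5*u*(1-p^3*u)^2*(1-p^3*u^2))) * ((1-p*u)*(1-p*u*p)*(1-p*u*p^2)))"

lemma gg_simps: "gg p N 0 = (-(p*(1-p*p^N)^2*(1-p^5*(p^N)^2))) * ((p^3*p^N-1)*(p^3*p^N-p)*(p^3*p^N-p^2))"
     "gg p N 1 = (p^5*p^N*(1-p^2*p^N)^2*(1-p^3*(p^N)^2)) * ((p^3*p^N-1)*(p^3*p^N-p)*(1-p*p^N))"
     "gg p N 2 = (p^3*(1-p^2*p^N)^2*(1-p^5*(p^N)^2)) * ((p^3*p^N-1)*(1-p*p^N)*(1-p*p^N*p))"
     "gg p N 3 = (-(p^5*p^N*(1-p^3*p^N)^2*(1-p^3*(p^N)^2))) * ((1-p*p^N)*(1-p*p^N*p)*(1-p*p^N*p^2))"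
  by (simp_all add: gg_def Let_def)

definition QQ :: "'a::field \<Rightarrow> nat \<Rightarrow> 'a" where
  "QQ p N = (let u = p^N in p^3*((1-p^3*u^2)*(1-p^4*u^2)*(1-p^5*u^2)))"

lemma ww_aux:
  fixes B :: "'a::field"
  assumes "B \<noteq> 0" "D \<noteq> 0" "g0*D^2 + g2*(p*E^2) = 0"
  shows "g0*(c*A^2/B^2) + g1*0 + g2*(c*p*(A*E)^2/(B*D)^2) + g3*0 = 0"
proof -
  have "g0*(c*A^2/B^2) + g1*0 + g2*(c*p*(A*E)^2/(B*D)^2) + g3*0 = (c*A^2/(B^2*D^2)) * (g0*D^2 + g2*(p*E^2))"
    using assms(1,2) by (simp add: field_simps power_mult_distrib)
  then show ?thesis using assms(3) by simp
qed

definition YY :: "'a::field \<Rightarrow> nat \<Rightarrow> 'a" where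
  "YY p k = qp p (p^2) k * p^k / (qp p p k ^ 2 * qp (p^2) (p^2) k)"
definition FF :: "'a::field \<Rightarrow> nat \<Rightarrow> nat \<Rightarrow> 'a" where
  "FF p M k = qp (inverse (p^M)) p k * qp (p^(M+1)) p k * YY p k"
definition CC :: "'a::field \<Rightarrow> nat \<Rightarrow> nat \<Rightarrow> 'a" where
  "CC p N k = qp (inverse (p^(N+3))) p k * qp (p^(N+1)) p k * YY p k"
definition HH :: "'a::field \<Rightarrow> nat \<Rightarrow> nat \<Rightarrow> 'a" where
  "HH p N k = p^2 * p^N * CC p N k * (1-p^k)^2 * (1-p^(2*k))"
definition ss :: "'a::field \<Rightarrow> nat \<Rightarrow> 'a" where
  "ss p M = (\<Sum>k<Suc M. FF p M k)"
definition ww :: "'a::field \<Rightarrow> nat \<Rightarrow> 'a" where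
  "ww p M = (if even M then p^(M div 2) * qp p (p^2) (M div 2) ^ 2 / qp (p^2) (p^2) (M div 2) ^ 2 else 0)"

context
  fixes p :: "'a::field"
  assumes p0: "p \<noteq> 0" and gen: "\<And>m. m > 0 \<Longrightarrow> p^m \<noteq> 1"
begin

lemma gen': "m > 0 \<Longrightarrow> 1 - p^m \<noteq> 0" using gen by auto

lemma qp_pp_nz: "qp p p k \<noteq> 0"
  by (rule qp_nonzero) (metis gen power_Suc zero_less_Suc)

lemma qp_p2p2_nz: "qp (p^2) (p^2) k \<noteq> 0"
proof (rule qp_nonzero)
  fix j assume "j < k"
  have "p^2 * (p^2)^j = p^(2*j+2)" by (simp add: power_mult[symmetric] power_add[symmetric] mult_ac)
  then show "p^2 * (p^2)^j \<noteq> 1" using gen[of "2*j+2"] by simp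
qed

lemma YY_Suc: "YY p (Suc k) * (1 - p^(Suc k))^2 * (1 - p^(2*Suc k)) = YY p k * (1 - p * p^(2*k)) * p"
proof -
  have e1: "qp p p (Suc k) = qp p p k * (1 - p^Suc k)" by (simp add: qp_Suc)
  have e2: "qp (p^2) (p^2) (Suc k) = qp (p^2) (p^2) k * (1 - p^(2*Suc k))"
    by (simp add: qp_Suc power_mult[symmetric] power_add[symmetric] mult_ac)
  have e3: "qp p (p^2) (Suc k) = qp p (p^2) k * (1 - p * p^(2*k))"
    by (simp add: qp_Suc power_mult)
  have n1: "1 - p^Suc k \<noteq> 0" "1 - p^(2*Suc k) \<noteq> 0" by (rule gen'; simp)+
  show ?thesis unfolding YY_def e1 e2 e3 using n1 qp_pp_nz[of k] qp_p2p2_nz[of k] p0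
    apply (simp add: field_simps)
    apply algebra
    done
qed

lemma inv_rel: "p^3 * p^N * inverse (p^(N+3)) = 1"
  using p0 by (simp add: power_add field_simps)

lemma HH_Suc: "HH p N (Suc k) = CC p N k * (p^3*p^N - p^k) * (1 - p^(N+1)*p^k) * (1 - p*p^(2*k))"
proof -
  define a where "a = inverse (p^(N+3))"
  have ra: "p^3 * p^N * a = 1" using inv_rel a_def by simp
  have "HH p N (Suc k) = p^2 * p^N * (qp a p k * (1 - a*p^k)) * (qp (p^(N+1)) p k * (1 - p^(N+1)*p^k))
       * (YY p (Suc k) * (1-p^Suc k)^2 * (1-p^(2*Suc k)))"
    unfolding HH_def CC_def a_def qp_Suc by (simp add: mult_ac)
  also have "\<dots> = p^2 * p^N * (qp a p k * (1 - a*p^k)) * (qp (p^(N+1)) p k * (1 - p^(N+1)*p^k))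
       * (YY p k * (1 - p * p^(2*k)) * p)" by (simp only: YY_Suc)
  also have "\<dots> = (qp a p k * qp (p^(N+1)) p k * YY p k) * ((p^3*p^N) - (p^3 * p^N * a)*p^k) * (1 - p^(N+1)*p^k) * (1 - p*p^(2*k))"
    by (simp add: algebra_simps power2_eq_square power3_eq_cube)
  also have "\<dots> = CC p N k * (p^3*p^N - p^k) * (1 - p^(N+1)*p^k) * (1 - p*p^(2*k))"
    unfolding ra by (simp add: CC_def a_def)
  finally show ?thesis .
qed

lemma HH_0: "HH p N 0 = 0" by (simp add: HH_def)

lemma CC_end: "CC p N (N+4) = 0"
proof -
  have "qp (inverse (p^(N+3))) p (N+4) = 0"
    by (rule qp_zero[of "N+3"]) (use p0 in auto)
  then show ?thesis by (simp add: CC_def)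
qed

lemma HH_end: "HH p N (N+4) = 0" by (simp add: HH_def CC_end)

lemma FF_zero: "M < k \<Longrightarrow> FF p M k = 0"
proof -
  assume "M < k"
  then have "qp (inverse (p^M)) p k = 0" by (rule qp_zero) (use p0 in auto)
  then show ?thesis by (simp add: FF_def)
qed

lemma sum_FF: "M < K \<Longrightarrow> (\<Sum>k<K. FF p M k) = ss p M"
proof -
  assume "M < K"
  have "(\<Sum>k<K. FF p M k) = (\<Sum>k<Suc M. FF p M k) + (\<Sum>k\<in>{Suc M..<K}. FF p M k)"
    using \<open>M < K\<close> by (metis Suc_leI lessThan_atLeast0 sum.atLeastLessThan_concat zero_le)
  also have "(\<Sum>k\<in>{Suc M..<K}. FF p M k) = 0" by (rule sum.neutral) (auto intro: FF_zero)
  finally show ?thesis by (simp add: ss_def)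
qed

lemma FF_rels:
  fixes N k
  defines "u \<equiv> p^N" and "x \<equiv> p^k"
  shows "FF p N k * ((p^3*u-1)*(p^3*u-p)*(p^3*u-p^2)) = CC p N k * ((p^3*u-x)*(p^3*u-p*x)*(p^3*u-p^2*x))"
    and "FF p (N+1) k * ((p^3*u-1)*(p^3*u-p)*(1-p*u)) = CC p N k * ((p^3*u-x)*(p^3*u-p*x)*(1-p*u*x))"
    and "FF p (N+2) k * ((p^3*u-1)*(1-p*u)*(1-p*u*p)) = CC p N k * ((p^3*u-x)*(1-p*u*x)*(1-p*u*p*x))"
    and "FF p (N+3) k * ((1-p*u)*(1-p*u*p)*(1-p*u*p^2)) = CC p N k * ((1-p*u*x)*(1-p*u*p*x)*(1-p*u*p^2*x))"
proof -
  define a where "a = inverse (p^(N+3))"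
  define b where "b = p*u"
  define t where "t = p^3*u"
  have ta: "t * a = 1" using inv_rel unfolding t_def a_def u_def by simp
  have i0: "inverse (p^N) = a*p*p*p" and i1: "inverse (p^(N+1)) = a*p*p"
    and i2: "inverse (p^(N+2)) = a*p"
    unfolding a_def using p0 by (simp_all add: power_add field_simps numeral_3_eq_3)
  have e1: "p^(N+1) = b" and e2: "p^(N+1+1) = b*p" and e3: "p^(N+2+1) = b*p*p" and e4: "p^(N+3+1) = b*p*p*p"
    unfolding b_def u_def by (simp_all add: power_add numeral_3_eq_3 mult_ac)
  have sa0: "(1-a) * qp (a*p) p k = qp a p k * (1-a*x)" using qp_shift unfolding x_def .
  have sa1: "(1-a*p) * qp (a*p*p) p k = qp (a*p) p k * (1-a*p*x)" using qp_shift[of "a*p" p k] unfolding x_def .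
  have sa2: "(1-a*p*p) * qp (a*p*p*p) p k = qp (a*p*p) p k * (1-a*p*p*x)" using qp_shift[of "a*p*p" p k] unfolding x_def .
  have sb0: "(1-b) * qp (b*p) p k = qp b p k * (1-b*x)" using qp_shift unfolding x_def .
  have sb1: "(1-b*p) * qp (b*p*p) p k = qp (b*p) p k * (1-b*p*x)" using qp_shift[of "b*p" p k] unfolding x_def .
  have sb2: "(1-b*p*p) * qp (b*p*p*p) p k = qp (b*p*p) p k * (1-b*p*p*x)" using qp_shift[of "b*p*p" p k] unfolding x_def .
  have CCe: "CC p N k = qp a p k * qp b p k * YY p k" unfolding CC_def a_def e1 ..
  have F0: "FF p N k = qp (a*p*p*p) p k * qp b p k * YY p k" unfolding FF_def i0 e1 ..
  have F1: "FF p (N+1) k = qp (a*p*p) p k * qp (b*p) p k * YY p k" unfolding FF_def i1 e2 ..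
  have F2: "FF p (N+2) k = qp (a*p) p k * qp (b*p*p) p k * YY p k" unfolding FF_def i2 e3 ..
  have F3: "FF p (N+3) k = qp a p k * qp (b*p*p*p) p k * YY p k" unfolding FF_def e4 a_def ..
  have bu: "p*u = b" "p^3*u = t" unfolding b_def t_def by simp_all
  show "FF p N k * ((p^3*u-1)*(p^3*u-p)*(p^3*u-p^2)) = CC p N k * ((p^3*u-x)*(p^3*u-p*x)*(p^3*u-p^2*x))"
    unfolding F0 CCe bu using ta sa0 sa1 sa2 by algebra
  show "FF p (N+1) k * ((p^3*u-1)*(p^3*u-p)*(1-p*u)) = CC p N k * ((p^3*u-x)*(p^3*u-p*x)*(1-p*u*x))"
    unfolding F1 CCe bu using ta sa0 sa1 sb0 by algebra
  show "FF p (N+2) k * ((p^3*u-1)*(1-p*u)*(1-p*u*p)) = CC p N k * ((p^3*u-x)*(1-p*u*x)*(1-p*u*p*x))"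
    unfolding F2 CCe bu using ta sa0 sb0 sb1 by algebra
  show "FF p (N+3) k * ((1-p*u)*(1-p*u*p)*(1-p*u*p^2)) = CC p N k * ((1-p*u*x)*(1-p*u*p*x)*(1-p*u*p^2*x))"
    unfolding F3 CCe bu using sb0 sb1 sb2 by algebra
qed

lemma comb:
  "gg p N 0 * FF p N k + gg p N 1 * FF p (N+1) k + gg p N 2 * FF p (N+2) k + gg p N 3 * FF p (N+3) k
   = QQ p N * (HH p N (Suc k) - HH p N k)"
proof -
  define u where "u = p^N"
  define x where "x = p^k"
  have x2: "p^(2*k) = x^2" unfolding x_def by (simp add: power_mult mult.commute)
  note R = FF_rels[of N k, folded u_def x_def]
  have gv: "gg p N 0 = (-(p*(1-p*u)^2*(1-p^5*u^2))) * ((p^3*u-1)*(p^3*u-p)*(p^3*u-p^2))"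
     "gg p N 1 = (p^5*u*(1-p^2*u)^2*(1-p^3*u^2)) * ((p^3*u-1)*(p^3*u-p)*(1-p*u))"
     "gg p N 2 = (p^3*(1-p^2*u)^2*(1-p^5*u^2)) * ((p^3*u-1)*(1-p*u)*(1-p*u*p))"
     "gg p N 3 = (-(p^5*u*(1-p^3*u)^2*(1-p^3*u^2))) * ((1-p*u)*(1-p*u*p)*(1-p*u*p^2))"
    by (simp_all add: gg_def u_def Let_def)
  have "gg p N 0 * FF p N k + gg p N 1 * FF p (N+1) k + gg p N 2 * FF p (N+2) k + gg p N 3 * FF p (N+3) k
     = CC p N k * ((-(p*(1-p*u)^2*(1-p^5*u^2))) * ((p^3*u-x)*(p^3*u-p*x)*(p^3*u-p^2*x))
    + (p^5*u*(1-p^2*u)^2*(1-p^3*u^2)) * ((p^3*u-x)*(p^3*u-p*x)*(1-p*u*x))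
    + (p^3*(1-p^2*u)^2*(1-p^5*u^2)) * ((p^3*u-x)*(1-p*u*x)*(1-p*u*p*x))
    + (-(p^5*u*(1-p^3*u)^2*(1-p^3*u^2))) * ((1-p*u*x)*(1-p*u*p*x)*(1-p*u*p^2*x)))"
    unfolding gv by (rule comb_abs[OF R])
  also have "\<dots> = CC p N k * (p^3*((1-p^3*u^2)*(1-p^4*u^2)*(1-p^5*u^2)) *
       ((p^3*u-x)*(1-p*u*x)*(1-p*x^2) - p^2*u*(1-x)^2*(1-x^2)))"
    by (simp only: key_poly)
  also have "\<dots> = QQ p N * (HH p N (Suc k) - HH p N k)"
  proof -
    have e: "p^(N+1) = p*u" unfolding u_def by simp
    have hd: "HH p N (Suc k) - HH p N k = CC p N k * ((p^3*u-x)*(1-p*u*x)*(1-p*x^2) - p^2*u*(1-x)^2*(1-x^2))"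
      unfolding HH_Suc unfolding HH_def e x2 u_def[symmetric] x_def[symmetric] by algebra
    show ?thesis unfolding hd QQ_def Let_def u_def[symmetric] by (simp only: mult_ac)
  qed
  finally show ?thesis .
qed

lemma recur: "gg p N 0 * ss p N + gg p N 1 * ss p (N+1) + gg p N 2 * ss p (N+2) + gg p N 3 * ss p (N+3) = 0"
proof -
  have "(\<Sum>k<N+4. gg p N 0 * FF p N k + gg p N 1 * FF p (N+1) k + gg p N 2 * FF p (N+2) k + gg p N 3 * FF p (N+3) k)
     = (\<Sum>k<N+4. QQ p N * (HH p N (Suc k) - HH p N k))" by (simp only: comb)
  also have "\<dots> = QQ p N * (HH p N (N+4) - HH p N 0)"
    by (simp only: sum_distrib_left[symmetric] sum_lessThan_telescope)
  also have "\<dots> = 0" by (simp add: HH_end HH_0)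
  finally have "(\<Sum>k<N+4. gg p N 0 * FF p N k + gg p N 1 * FF p (N+1) k + gg p N 2 * FF p (N+2) k + gg p N 3 * FF p (N+3) k) = 0" .
  moreover have "(\<Sum>k<N+4. gg p N 0 * FF p N k + gg p N 1 * FF p (N+1) k + gg p N 2 * FF p (N+2) k + gg p N 3 * FF p (N+3) k)
     = gg p N 0 * (\<Sum>k<N+4. FF p N k) + gg p N 1 * (\<Sum>k<N+4. FF p (N+1) k) + gg p N 2 * (\<Sum>k<N+4. FF p (N+2) k) + gg p N 3 * (\<Sum>k<N+4. FF p (N+3) k)"
    by (simp add: sum.distrib sum_distrib_left)
  moreover have "(\<Sum>k<N+4. FF p N k) = ss p N" "(\<Sum>k<N+4. FF p (N+1) k) = ss p (N+1)"
    "(\<Sum>k<N+4. FF p (N+2) k) = ss p (N+2)" "(\<Sum>k<N+4. FF p (N+3) k) = ss p (N+3)"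
    by (rule sum_FF; simp)+
  ultimately show ?thesis by simp
qed

lemma nz_of: "x = p^m \<Longrightarrow> m > 0 \<Longrightarrow> 1 - x \<noteq> 0" using gen by auto

lemma one_minus_pow_nz: "m > 0 \<Longrightarrow> 1 - p^m \<noteq> 0" using gen by auto

lemma gg3_nz: "gg p N 3 \<noteq> 0"
proof -
  define u where "u = p^N"
  have "1 - p^3*u \<noteq> 0" by (rule nz_of[of _ "N+3"]) (simp_all add: u_def power_add mult_ac)
  moreover have "1 - p^3*u^2 \<noteq> 0" by (rule nz_of[of _ "2*N+3"]) (simp_all add: u_def power_add power_mult mult_ac power2_eq_square)
  moreover have "1 - p*u \<noteq> 0" by (rule nz_of[of _ "N+1"]) (simp_all add: u_def power_add mult_ac)
  moreover have "1 - p*u*p \<noteq> 0" by (rule nz_of[of _ "N+2"]) (simp_all add: u_def power_add mult_ac power2_eq_square)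
  moreover have "1 - p*u*p^2 \<noteq> 0" by (rule nz_of[of _ "N+3"]) (simp_all add: u_def power_add mult_ac power2_eq_square power3_eq_cube)
  moreover have "u \<noteq> 0" using p0 by (simp add: u_def)
  ultimately show ?thesis using p0 by (simp add: gg_def Let_def u_def[symmetric])
qed

lemma ww_recur: "gg p N 0 * ww p N + gg p N 1 * ww p (N+1) + gg p N 2 * ww p (N+2) + gg p N 3 * ww p (N+3) = 0"
proof (cases "even N")
  case True
  then obtain m where m: "N = 2*m" by blast
  define u where "u = p^N"
  define A where "A = qp p (p^2) m"
  define B where "B = qp (p^2) (p^2) m"
  have um: "(p^2)^m = u" unfolding u_def m by (simp add: power_mult)
  have B0: "B \<noteq> 0" unfolding B_def by (rule qp_p2p2_nz)
  have n2: "1 - p^2*u \<noteq> 0" by (rule nz_of[of _ "N+2"]) (simp_all add: u_def power_add mult_ac power2_eq_square)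
  have w0: "ww p N = p^m * A^2 / B^2" unfolding ww_def A_def B_def using m by simp
  have w1: "ww p (N+1) = 0" "ww p (N+3) = 0" unfolding ww_def using m by auto
  have w2: "ww p (N+2) = p^m * p * (A * (1 - p*u))^2 / (B * (1 - p^2*u))^2"
  proof -
    have "(N+2) div 2 = Suc m" "even (N+2)" using m by auto
    then show ?thesis unfolding ww_def A_def B_def by (simp add: qp_Suc um mult_ac)
  qed
  have "gg p N 0 * (1 - p^2*u)^2 + gg p N 2 * (p * (1 - p*u)^2) = 0"
    unfolding gg_simps u_def[symmetric] by algebra
  then show ?thesis unfolding w0 w1 w2 by (rule ww_aux[OF B0 n2])
next
  case False
  then obtain m where m: "N = 2*m+1" using oddE by blast
  define u where "u = p^N"
  define A where "A = qp p (p^2) (Suc m)"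
  define B where "B = qp (p^2) (p^2) (Suc m)"
  have um: "(p^2)^(Suc m) = p*u"
  proof -
    have "(p^2)^(Suc m) = p^(2*Suc m)" by (simp only: power_mult)
    also have "2*Suc m = Suc N" using m by simp
    finally show ?thesis unfolding u_def by simp
  qed
  have B0: "B \<noteq> 0" unfolding B_def by (rule qp_p2p2_nz)
  have n3: "1 - p^3*u \<noteq> 0" by (rule nz_of[of _ "N+3"]) (simp_all add: u_def power_add mult_ac)
  have w0: "ww p (N+1) = p^(Suc m) * A^2 / B^2" unfolding ww_def A_def B_def using m by simp
  have w1: "ww p N = 0" "ww p (N+2) = 0" unfolding ww_def using m by auto
  have w2: "ww p (N+3) = p^(Suc m) * p * (A * (1 - p^2*u))^2 / (B * (1 - p^3*u))^2"
  proof -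
    have d: "(N+3) div 2 = Suc (Suc m)" "even (N+3)" using m by auto
    have a2: "qp p (p^2) (Suc (Suc m)) = A * (1 - p^2*u)"
      unfolding A_def qp_Suc[of _ _ "Suc m"] um by (simp add: power2_eq_square mult.assoc)
    have b2: "qp (p^2) (p^2) (Suc (Suc m)) = B * (1 - p^3*u)"
      unfolding B_def qp_Suc[of _ _ "Suc m"] um by (simp add: power2_eq_square power3_eq_cube mult.assoc)
    show ?thesis unfolding ww_def d a2 b2 using False by (simp add: mult_ac)
  qed
  have "gg p N 1 * (1 - p^3*u)^2 + gg p N 3 * (p * (1 - p^2*u)^2) = 0"
    unfolding gg_simps u_def[symmetric] by algebra
  then have "gg p N 1*(p^(Suc m)*A^2/B^2) + gg p N 0*0 + gg p N 3*(p^(Suc m)*p*(A*(1 - p^2*u))^2/(B*(1 - p^3*u))^2) + gg p N 2*0 = 0"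
    by (rule ww_aux[OF B0 n3])
  then show ?thesis unfolding w0 w1 w2 by (simp add: algebra_simps)
qed

lemma ss_base0: "ss p 0 = ww p 0"
  by (simp add: ss_def ww_def FF_def YY_def)

lemma qp_1: "qp a b 1 = 1 - a" by (simp add: qp_def)

lemma ss_base1: "ss p 1 = ww p 1"
proof -
  define a where "a = 1 - p"
  define c where "c = 1 - p*p"
  have n: "a \<noteq> 0" "c \<noteq> 0" unfolding a_def c_def using gen'[of 1] gen'[of 2] by (auto simp: power2_eq_square)
  have "ss p 1 = FF p 1 0 + FF p 1 1" by (simp add: ss_def)
  also have "FF p 1 0 = 1" by (simp add: FF_def YY_def)
  also have "FF p 1 1 = ((1 - inverse p) * p) * (c * a / (a^2 * c))"
    unfolding FF_def YY_def qp_1 a_def c_def by (simp add: mult_ac power2_eq_square)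
  also have "c * a / (a^2 * c) = 1 / a" using n by (simp add: power2_eq_square)
  also have "(1 - inverse p) * p = - a" using p0 unfolding a_def by (simp add: algebra_simps)
  finally show ?thesis using n by (simp add: ww_def)
qed

lemma qp_2: "qp a b 2 = (1 - a) * (1 - a*b)" by (simp add: qp_def numeral_2_eq_2)

lemma ss_base2: "ss p 2 = ww p 2"
proof -
  have n: "1 - p \<noteq> 0" "1 - p^2 \<noteq> 0" "1 - p^3 \<noteq> 0" "1 - p^4 \<noteq> 0"
    using gen'[of 1] gen'[of 2] gen'[of 3] gen'[of 4] by auto
  have i: "inverse p * p = 1" using p0 by simp
  have "ss p 2 = FF p 2 0 + FF p 2 1 + FF p 2 2" by (simp add: ss_def numeral_2_eq_2)
  also have "\<dots> = 1 + (1 - inverse (p^2)) * (1 - p^(2+1)) * ((1 - p) * p^1 / ((1-p)^2 * (1-p^2)))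
     + ((1 - inverse (p^2)) * (1 - inverse (p^2) * p)) * ((1 - p^(2+1)) * (1 - p^(2+1)*p))
       * ((1-p)*(1-p*p^2) * p^2 / (((1-p)*(1-p*p))^2 * ((1 - p^2)*(1-p^2*p^2))))"
    unfolding FF_def YY_def qp_1 qp_2 by simp
  also have "\<dots> = p * (1-p)^2 / (1-p^2)^2"
    using n p0
    apply (simp add: divide_simps)
    apply algebra
    done
  also have "\<dots> = ww p 2" by (simp add: ww_def qp_def)
  finally show ?thesis .
qed

lemma ss_ww: "ss p M = ww p M"
proof (induction M rule: less_induct)
  case (less M)
  show ?case
  proof (cases "M < 3")
    case True
    then have "M = 0 \<or> M = 1 \<or> M = 2" by auto
    then show ?thesis using ss_base0 ss_base1 ss_base2 by auto
  next
    case False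
    define N where "N = M - 3"
    have N: "M = N + 3" using False unfolding N_def by simp
    have ih: "ss p N = ww p N" "ss p (N+1) = ww p (N+1)" "ss p (N+2) = ww p (N+2)"
      using less N by auto
    have "gg p N 3 * ss p (N+3) = gg p N 3 * ww p (N+3)"
      using recur[of N] ww_recur[of N] unfolding ih by algebra
    then show ?thesis using gg3_nz N by simp
  qed
qed

end


lemma rf_add: "rf_of_poly (a + b) = rf_of_poly a + rf_of_poly b" by (simp add: rf_of_poly_def)
lemma rf_mult: "rf_of_poly (a * b) = rf_of_poly a * rf_of_poly b" by (simp add: rf_of_poly_def)
lemma rf_diff: "rf_of_poly (a - b) = rf_of_poly a - rf_of_poly b" by (simp add: rf_of_poly_def)
lemma rf_1: "rf_of_poly 1 = 1" by (simp add: rf_of_poly_def One_fract_def)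
lemma rf_0: "rf_of_poly 0 = 0" by (simp add: rf_of_poly_def Zero_fract_def)
lemma rf_pow: "rf_of_poly (a ^ n) = rf_of_poly a ^ n"
  by (induction n rule: nat.induct) (simp_all add: rf_1 rf_mult)
lemma rf_prod: "rf_of_poly (\<Prod>j<(k::nat). f j) = (\<Prod>j<k. rf_of_poly (f j))"
  by (induction k rule: nat.induct) (simp_all add: rf_1 rf_mult)
lemma rf_inj: "rf_of_poly a = rf_of_poly b \<longleftrightarrow> a = b"
  by (simp add: rf_of_poly_def eq_fract)
lemma qvar_rf: "qvar = rf_of_poly [:0,1:]" by (simp add: qvar_def rf_of_poly_def)

definition pint :: "complex poly \<Rightarrow> ratfun \<Rightarrow> bool" where
  "pint P z \<longleftrightarrow> (\<exists>a b. b \<noteq> 0 \<and> coprime b P \<and> z = Fract a b)"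

lemma pint_rf: "pint P (rf_of_poly a)"
  unfolding pint_def rf_of_poly_def by (rule exI[of _ a], rule exI[of _ 1]) simp

lemma pint_1: "pint P 1" using pint_rf[of P 1] by (simp add: rf_1)

lemma pint_add: "pint P x \<Longrightarrow> pint P y \<Longrightarrow> pint P (x + y)"
proof -
  assume "pint P x" "pint P y"
  then obtain a b c d where "b \<noteq> 0" "coprime b P" "x = Fract a b" "d \<noteq> 0" "coprime d P" "y = Fract c d"
    unfolding pint_def by blast
  then have "b * d \<noteq> 0 \<and> coprime (b * d) P \<and> x + y = Fract (a * d + c * b) (b * d)" by simp
  then show ?thesis unfolding pint_def by blast
qed

lemma pint_mult: "pint P x \<Longrightarrow> pint P y \<Longrightarrow> pint P (x * y)"
proof -
  assume "pint P x" "pint P y"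
  then obtain a b c d where "b \<noteq> 0" "coprime b P" "x = Fract a b" "d \<noteq> 0" "coprime d P" "y = Fract c d"
    unfolding pint_def by blast
  then have "b * d \<noteq> 0 \<and> coprime (b * d) P \<and> x * y = Fract (a * c) (b * d)" by simp
  then show ?thesis unfolding pint_def by blast
qed

lemma pint_uminus: "pint P x \<Longrightarrow> pint P (- x)"
proof -
  assume "pint P x"
  then obtain a b where "b \<noteq> 0" "coprime b P" "x = Fract a b"
    unfolding pint_def by blast
  then have "b \<noteq> 0 \<and> coprime b P \<and> - x = Fract (- a) b" by simp
  then show ?thesis unfolding pint_def by blast
qed

lemma pint_diff: "pint P x \<Longrightarrow> pint P y \<Longrightarrow> pint P (x - y)"
  using pint_add[of P x "- y"] pint_uminus[of P y] by simp

lemma pint_power: "pint P x \<Longrightarrow> pint P (x ^ n)"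
  by (induction n rule: nat.induct) (simp_all add: pint_1 pint_mult)

lemma pint_sum: "(\<And>j. j < k \<Longrightarrow> pint P (f j)) \<Longrightarrow> pint P (\<Sum>j<(k::nat). f j)"
  by (induction k rule: nat.induct) (simp_all add: pint_add pint_rf[of P 0, unfolded rf_0])

lemma pint_prod: "(\<And>j. j < k \<Longrightarrow> pint P (f j)) \<Longrightarrow> pint P (\<Prod>j<(k::nat). f j)"
  by (induction k rule: nat.induct) (simp_all add: pint_mult pint_1)

lemma pint_inverse_rf: "b \<noteq> 0 \<Longrightarrow> coprime b P \<Longrightarrow> pint P (inverse (rf_of_poly b))"
  unfolding pint_def rf_of_poly_def by (rule exI[of _ 1], rule exI[of _ b]) simp

lemma rf_cong_intro: "x - y = rf_of_poly P * z \<Longrightarrow> pint P z \<Longrightarrow> rf_cong x y P"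
proof -
  assume h: "x - y = rf_of_poly P * z" "pint P z"
  then obtain a b where "b \<noteq> 0" "coprime b P" "z = Fract a b" unfolding pint_def by blast
  then show ?thesis unfolding rf_cong_def using h(1)
    by (intro exI[of _ "P * a"] exI[of _ b]) (simp add: rf_of_poly_def)
qed

definition zeta :: "nat \<Rightarrow> nat \<Rightarrow> complex" where
  "zeta n j = cis (2 * pi * real j / real n)"

definition rootset :: "nat \<Rightarrow> nat set" where
  "rootset n = {j\<in>{1..n}. coprime j n}"

lemma cyc_eq: "cyclotomic n = (\<Prod>j\<in>rootset n. [:- zeta n j, 1:])"
  by (simp add: cyclotomic_def zeta_def rootset_def)

lemma coprime_linear: fixes M :: "complex poly" shows "poly M z \<noteq> 0 \<Longrightarrow> coprime M [:- z, 1:]"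
proof -
  assume "poly M z \<noteq> 0"
  then have "\<not> [:- z, 1:] dvd M" by (simp add: poly_eq_0_iff_dvd)
  moreover have "prime_elem [:- z, 1:]" using prime_elem_linear_field_poly[of 1 "-z"] by simp
  ultimately show ?thesis using prime_elem_imp_coprime coprime_commute by blast
qed

lemma coprime_cyc: "(\<And>j. j \<in> rootset n \<Longrightarrow> poly M (zeta n j) \<noteq> 0) \<Longrightarrow> coprime M (cyclotomic n)"
  unfolding cyc_eq by (rule prod_coprime_right) (rule coprime_linear)

lemma cis_eq_1_int: "cis x = 1 \<Longrightarrow> \<exists>i::int. x = of_int i * 2 * pi"
proof -
  assume "cis x = 1"
  then have "cos x = 1" by (metis cis.sel(1) one_complex.sel(1))
  then show ?thesis by (simp add: cos_one_2pi_int)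
qed

lemma zeta_pow: "zeta n j ^ m = cis (2 * pi * real (j * m) / real n)"
  unfolding zeta_def DeMoivre by (simp add: field_simps)

lemma zeta_pow_1:
  assumes n: "n > 0" and j: "coprime j n" and e: "zeta n j ^ m = 1"
  shows "n dvd m"
proof -
  from e obtain i :: int where i: "2 * pi * real (j * m) / real n = of_int i * 2 * pi"
    unfolding zeta_pow using cis_eq_1_int by blast
  have "real (j * m) = of_int i * real n" using i n by (simp add: field_simps)
  then have "int (j * m) = i * int n" by (metis of_int_eq_iff of_int_mult of_int_of_nat_eq)
  then have "int n dvd int (j * m)" by simp
  then have "n dvd j * m" by (simp only: of_nat_dvd_iff)
  then show ?thesis using j by (simp add: coprime_commute coprime_dvd_mult_right_iff)
qed

lemma zeta_pow_n: "n > 0 \<Longrightarrow> zeta n j ^ n = 1"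
proof -
  assume n: "n > 0"
  have "2 * pi * real (j * n) / real n = 2 * pi * real j" using n by simp
  then show ?thesis unfolding zeta_pow using cis_multiple_2pi[of "real j"] by simp
qed

lemma zeta_inj:
  assumes n: "n > 0" and j: "j \<in> {1..n}" and k: "k \<in> {1..n}" and e: "zeta n j = zeta n k"
  shows "j = k"
proof -
  have "cis (2 * pi * real j / real n - 2 * pi * real k / real n) = 1"
    using e unfolding zeta_def cis_divide[symmetric] by simp
  then obtain i :: int where i: "2 * pi * real j / real n - 2 * pi * real k / real n = of_int i * 2 * pi"
    using cis_eq_1_int by blast
  have "2 * pi * (real j - real k - of_int i * real n) = 0" using i n by (simp add: field_simps)
  then have "real j - real k = of_int i * real n" by simp
  then have ii: "int j - int k = i * int n" by (metis of_int_eq_iff of_int_mult of_int_of_nat_eq of_int_diff)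
  have "\<bar>int j - int k\<bar> < int n" using j k by auto
  then have "\<bar>i\<bar> * int n < int n" unfolding ii by (simp add: abs_mult)
  moreover have "i \<noteq> 0 \<Longrightarrow> 1 * int n \<le> \<bar>i\<bar> * int n" by (rule mult_right_mono) auto
  ultimately have "i = 0" by force
  then show ?thesis using ii by simp
qed

lemma prod_linear_dvd:
  fixes z :: "nat \<Rightarrow> complex"
  assumes "finite S" "inj_on z S" "\<And>j. j \<in> S \<Longrightarrow> poly Q (z j) = 0"
  shows "(\<Prod>j\<in>S. [:- z j, 1:]) dvd Q"
  using assms
proof (induction S rule: finite_induct)
  case empty then show ?case by simp
next
  case (insert x F)
  have d1: "[:- z x, 1:] dvd Q" using insert.prems(2) by (simp add: poly_eq_0_iff_dvd)
  have d2: "(\<Prod>j\<in>F. [:- z j, 1:]) dvd Q" using insert by (auto intro: inj_on_subset)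
  have c: "coprime [:- z x, 1:] (\<Prod>j\<in>F. [:- z j, 1:])"
  proof (rule prod_coprime_right)
    fix y assume y: "y \<in> F"
    have "z y \<noteq> z x" using insert.prems(1) insert.hyps(2) y by (auto simp: inj_on_def)
    then have "poly [:- z x, 1:] (z y) \<noteq> 0" by simp
    then show "coprime [:- z x, 1:] [:- z y, 1:]" using coprime_linear coprime_commute by blast
  qed
  show ?case by (subst prod.insert[OF insert.hyps]) (rule divides_mult[OF d1 d2 c])
qed

lemma cyc_dvd: "n > 0 \<Longrightarrow> cyclotomic n dvd (1 - [:0,1:]^n)"
  unfolding cyc_eq
proof (rule prod_linear_dvd)
  assume n: "n > 0"
  show "finite (rootset n)" by (simp add: rootset_def)
  show "inj_on (zeta n) (rootset n)" using zeta_inj n by (auto simp: inj_on_def rootset_def)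
  fix j assume "j \<in> rootset n"
  show "poly (1 - [:0,1:]^n) (zeta n j) = 0" using zeta_pow_n[OF n] by simp
qed

lemma zeta_nz: "zeta n j \<noteq> 0" by (simp add: zeta_def)




abbreviation X :: "complex poly" where "X \<equiv> [:0,1:]"

lemma qvar_pow: "qvar ^ m = rf_of_poly (X ^ m)" by (simp add: qvar_rf rf_pow)

lemma qvar_nz: "qvar \<noteq> 0"
  using rf_inj[of X 0] by (simp add: qvar_rf rf_0)

lemma p_gen: "m > 0 \<Longrightarrow> (qvar^2)^m \<noteq> 1"
proof
  assume m: "m > 0" and e: "(qvar^2)^m = 1"
  have "rf_of_poly (X^(2*m)) = (qvar^2)^m" unfolding qvar_pow[symmetric] by (simp only: power_mult)
  then have "rf_of_poly (X^(2*m)) = rf_of_poly 1" using e by (simp add: rf_1)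
  then have "X^(2*m) = 1" by (simp add: rf_inj)
  then have "degree (X^(2*m)) = 0" by simp
  moreover have "degree (X^(2*m)) = 2*m" using degree_linear_power[of 0 "2*m"] by simp
  ultimately show False using m by simp
qed

lemma p_nz: "qvar^2 \<noteq> 0" using qvar_nz by simp

lemma ss_ww_q: "ss (qvar^2) M = ww (qvar^2) M"
  using ss_ww[of "qvar^2" M] p_nz p_gen by blast
lemma sum_FF_q: "M < K \<Longrightarrow> (\<Sum>k<K. FF (qvar^2) M k) = ss (qvar^2) M"
  using sum_FF[of "qvar^2" M K] p_nz p_gen by blast

lemma qpoch_qp: "qpoch a b k = qp a b k" by (simp add: qpoch_def qp_def)

definition good :: "nat \<Rightarrow> complex poly \<Rightarrow> bool" where
  "good n M \<longleftrightarrow> (\<forall>j\<in>rootset n. poly M (zeta n j) \<noteq> 0)"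

lemma good_mult: "good n a \<Longrightarrow> good n b \<Longrightarrow> good n (a * b)" by (simp add: good_def)
lemma good_pow: "good n a \<Longrightarrow> good n (a ^ m)" by (simp add: good_def)
lemma good_prod: "(\<And>j. j < k \<Longrightarrow> good n (f j)) \<Longrightarrow> good n (\<Prod>j<(k::nat). f j)"
  by (induction k) (simp_all add: good_mult, simp add: good_def)
lemma good_X: "good n (X ^ m)" by (simp add: good_def zeta_nz)
lemma good_one_minus: "n > 0 \<Longrightarrow> \<not> n dvd m \<Longrightarrow> good n (1 - X ^ m)"
  unfolding good_def rootset_def using zeta_pow_1 by fastforce

lemma root1: "n > 0 \<Longrightarrow> 1 \<in> rootset n" by (simp add: rootset_def)

lemma pint_inv_good: "n > 0 \<Longrightarrow> good n M \<Longrightarrow> pint (cyclotomic n) (inverse (rf_of_poly M))"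
proof -
  assume n: "n > 0" and g: "good n M"
  have "M \<noteq> 0" using g root1[OF n] unfolding good_def by fastforce
  moreover have "coprime M (cyclotomic n)" using g unfolding good_def by (intro coprime_cyc) auto
  ultimately show ?thesis by (rule pint_inverse_rf)
qed

lemma pint_sq: "pint P z \<Longrightarrow> pint (P^2) z"
  unfolding pint_def by auto

lemma qp_rf: "qp (rf_of_poly a) (rf_of_poly b) k = rf_of_poly (\<Prod>j<k. 1 - a * b ^ j)"
  by (simp add: qp_def rf_prod rf_diff rf_mult rf_pow rf_1)

lemma prod_diff_lemma:
  fixes A B C :: "nat \<Rightarrow> ratfun"
  assumes "\<And>j. j < k \<Longrightarrow> A j = B j + E * C j"
    and "\<And>j. j < k \<Longrightarrow> pint P (A j)" "\<And>j. j < k \<Longrightarrow> pint P (B j)" "\<And>j. j < k \<Longrightarrow> pint P (C j)"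
  shows "\<exists>Z. pint P Z \<and> (\<Prod>j<k. A j) - (\<Prod>j<k. B j) = E * Z"
  using assms
proof (induction k)
  case 0
  then show ?case by (intro exI[of _ 0]) (simp add: pint_rf[of P 0, unfolded rf_0])
next
  case (Suc k)
  then obtain Z where Z: "pint P Z" "(\<Prod>j<k. A j) - (\<Prod>j<k. B j) = E * Z" by auto
  have e: "(\<Prod>j<Suc k. A j) - (\<Prod>j<Suc k. B j) = E * (Z * A k + (\<Prod>j<k. B j) * C k)"
  proof -
    have "(\<Prod>j<Suc k. A j) - (\<Prod>j<Suc k. B j) = ((\<Prod>j<k. A j) - (\<Prod>j<k. B j)) * A k + (\<Prod>j<k. B j) * (A k - B k)"
      by (simp add: algebra_simps)
    also have "A k - B k = E * C k" using Suc.prems(1)[of k] by simp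
    finally show ?thesis using Z(2) by (simp add: algebra_simps)
  qed
  have "pint P (Z * A k + (\<Prod>j<k. B j) * C k)"
    using Z(1) Suc.prems by (intro pint_add pint_mult pint_prod) auto
  then show ?case using e by blast
qed


lemma pint_qvar: "pint P (qvar ^ m)" unfolding qvar_pow by (rule pint_rf)
lemma pint_q: "pint P qvar" using pint_qvar[of P 1] by simp

lemma ndvd_odd:
  fixes n :: nat
  assumes "odd n" "0 < i" "i < n"
  shows "\<not> n dvd 2 * i" "\<not> n dvd 4 * i"
proof -
  have c2: "coprime n 2" using assms(1) by (simp add: coprime_commute)
  have c4: "coprime n 4" using c2 by (metis coprime_power_right_iff power2_eq_square numeral_Bit0 mult_2 mult_2_right numeral_times_numeral semiring_norm(12) zero_neq_numeral coprime_mult_right_iff)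
  have "\<not> n dvd i" using assms(2,3) by (auto dest: dvd_imp_le)
  then show "\<not> n dvd 2 * i" "\<not> n dvd 4 * i"
    using coprime_dvd_mult_left_iff[OF c2, of i] coprime_dvd_mult_left_iff[OF c4, of i]
    by (simp_all add: mult.commute[of i])
qed

lemma p_rf: "qvar^2 = rf_of_poly (X^2)" by (rule qvar_pow)
lemma p2_rf: "(qvar^2)^2 = rf_of_poly ((X^2)^2)" by (simp add: p_rf rf_pow)

lemma YY_pint:
  assumes n: "odd n" and k: "k < n"
  shows "pint (cyclotomic n) (YY (qvar^2) k)"
proof -
  have n0: "n > 0" using n by (cases n) auto
  define D where "D = (\<Prod>j<k. 1 - X^2 * (X^2)^j) ^ 2 * (\<Prod>j<k. 1 - (X^2)^2 * ((X^2)^2)^j)"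
  have Y: "YY (qvar^2) k = (qp (qvar^2) ((qvar^2)^2) k * (qvar^2)^k) * inverse (rf_of_poly D)"
  proof -
    have e1: "qp (qvar^2) (qvar^2) k = rf_of_poly (\<Prod>j<k. 1 - X^2 * (X^2)^j)" by (simp only: p_rf qp_rf)
    have e2: "qp ((qvar^2)^2) ((qvar^2)^2) k = rf_of_poly (\<Prod>j<k. 1 - (X^2)^2 * ((X^2)^2)^j)" by (simp only: p2_rf qp_rf)
    show ?thesis unfolding YY_def e1 e2 D_def rf_mult rf_pow by (simp add: divide_inverse)
  qed
  have g1: "good n (1 - X^2 * (X^2)^j)" if "j < k" for j
  proof -
    have "X^2 * (X^2)^j = X^(2 * Suc j)"
      by (simp only: power_mult[symmetric] power_add[symmetric]) (rule arg_cong[where f="(^) X"], simp)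
    moreover have "\<not> n dvd 2 * Suc j" using ndvd_odd[OF n, of "Suc j"] that k by simp
    ultimately show ?thesis using good_one_minus[OF n0, of "2 * Suc j"] by metis
  qed
  have g2: "good n (1 - (X^2)^2 * ((X^2)^2)^j)" if "j < k" for j
  proof -
    have "(X^2)^2 * ((X^2)^2)^j = X^(4 * Suc j)"
      by (simp only: power_mult[symmetric] power_add[symmetric]) (rule arg_cong[where f="(^) X"], simp)
    moreover have "\<not> n dvd 4 * Suc j" using ndvd_odd[OF n, of "Suc j"] that k by simp
    ultimately show ?thesis using good_one_minus[OF n0, of "4 * Suc j"] by metis
  qed
  have "good n D" unfolding D_def using g1 g2 by (intro good_mult good_pow good_prod) auto
  then have "pint (cyclotomic n) (inverse (rf_of_poly D))" by (rule pint_inv_good[OF n0])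
  moreover have "pint (cyclotomic n) (qp (qvar^2) ((qvar^2)^2) k * (qvar^2)^k)"
    unfolding qp_def by (intro pint_mult pint_prod pint_diff pint_power pint_1 pint_qvar)
  ultimately show ?thesis unfolding Y by (rule pint_mult[rotated])
qed


lemma abc_aux:
  fixes w v iv b :: "'a::field"
  assumes "b = (1 - w*iv)*(1 - w*v)" "v*iv = 1"
  shows "(1-w)^2 = b + (1-v)^2*(w*iv)"
  using assms by algebra

lemma term_diff:
  assumes n: "odd n" and k: "k < n"
  shows "\<exists>Z. pint (cyclotomic n) Z \<and>
     qp qvar (qvar^2) k ^ 2 * YY (qvar^2) k - FF (qvar^2) (n div 2) k = rf_of_poly ((cyclotomic n)^2) * Z"
proof -
  define N where "N = n div 2"
  have n0: "n > 0" using n by (cases n) auto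
  have nN: "n = 2*N + 1" using n unfolding N_def by simp
  define q where "q = qvar"
  define p where "p = q^2"
  have q0: "q \<noteq> 0" unfolding q_def by (rule qvar_nz)
  define A where "A j = (1 - q*p^j)^2" for j
  define B where "B j = (1 - inverse (p^N)*p^j)*(1 - p^(N+1)*p^j)" for j
  define C where "C j = q*p^j*inverse (q^n)" for j
  define E where "E = (1 - q^n)^2"
  have hq: "q^n = q * p^N" unfolding nN p_def by (simp add: power_mult[symmetric] power_add)
  have iv: "q^n * inverse (q^n) = 1" using q0 by simp
  have i1: "inverse (p^N) = q * inverse (q^n)" unfolding hq using q0 by (simp add: field_simps)
  have i2: "p^(N+1) = q * q^n" unfolding hq p_def by (simp add: power2_eq_square)
  have ABC: "A j = B j + E * C j" for j
  proof -
    have "B j = (1 - (q*p^j)*inverse (q^n))*(1 - (q*p^j)*q^n)" unfolding B_def i1 i2 by (simp add: mult_ac)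
    then show ?thesis unfolding A_def C_def E_def using abc_aux[OF _ iv, of "B j" "q*p^j"] by (simp add: mult_ac)
  qed
  have pN: "p^N = rf_of_poly (X^(2*N))" unfolding p_def q_def power_mult[symmetric] by (rule qvar_pow)
  have pn: "q^n = rf_of_poly (X^n)" unfolding q_def by (rule qvar_pow)
  have pint_ip: "pint (cyclotomic n) (inverse (p^N))" unfolding pN by (rule pint_inv_good[OF n0 good_X])
  have pint_iq: "pint (cyclotomic n) (inverse (q^n))" unfolding pn by (rule pint_inv_good[OF n0 good_X])
  have pint_p: "pint (cyclotomic n) (p^m)" for m unfolding p_def q_def power_mult[symmetric] by (rule pint_qvar)
  have pA: "pint (cyclotomic n) (A j)" for j unfolding A_def q_def
    by (intro pint_power pint_diff pint_1 pint_mult pint_q pint_p[unfolded p_def q_def] pint_p[of 1, unfolded power_one_right])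
  have pB: "pint (cyclotomic n) (B j)" for j unfolding B_def
    by (intro pint_mult pint_diff pint_1 pint_ip pint_p pint_p[of 1, unfolded power_one_right])
  have pC: "pint (cyclotomic n) (C j)" for j unfolding C_def q_def
    by (intro pint_mult pint_q pint_p pint_p[unfolded p_def q_def] pint_iq[unfolded q_def] pint_p[of 1, unfolded power_one_right])
  obtain Z0 where Z0: "pint (cyclotomic n) Z0" "(\<Prod>j<k. A j) - (\<Prod>j<k. B j) = E * Z0"
    using prod_diff_lemma[of k A B E C "cyclotomic n"] ABC pA pB pC by blast
  have PA: "qp q p k ^ 2 = (\<Prod>j<k. A j)" unfolding qp_def A_def by (simp add: prod_power_distrib)
  have PB: "qp (inverse (p^N)) p k * qp (p^(N+1)) p k = (\<Prod>j<k. B j)"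
    unfolding qp_def B_def by (simp add: prod.distrib)
  obtain R where R: "1 - X^n = cyclotomic n * R" using cyc_dvd[OF n0] by (elim dvdE)
  have EE: "E = rf_of_poly ((cyclotomic n)^2) * rf_of_poly (R^2)"
    unfolding E_def pn rf_1[symmetric] rf_diff[symmetric] rf_pow[symmetric] rf_mult[symmetric] R
    by (simp add: power_mult_distrib)
  have "qp qvar (qvar^2) k ^ 2 * YY (qvar^2) k - FF (qvar^2) N k = ((\<Prod>j<k. A j) - (\<Prod>j<k. B j)) * YY p k"
    unfolding FF_def PA[symmetric] PB[symmetric] p_def q_def by (simp add: algebra_simps)
  also have "\<dots> = rf_of_poly ((cyclotomic n)^2) * (rf_of_poly (R^2) * Z0 * YY p k)"
    unfolding Z0(2) EE by (simp add: mult_ac)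
  finally have eq: "qp qvar (qvar^2) k ^ 2 * YY (qvar^2) k - FF (qvar^2) N k = rf_of_poly ((cyclotomic n)^2) * (rf_of_poly (R^2) * Z0 * YY p k)" .
  have "pint (cyclotomic n) (rf_of_poly (R^2) * Z0 * YY p k)"
    unfolding p_def q_def by (intro pint_mult pint_rf Z0(1) YY_pint[OF n k])
  then show ?thesis using eq unfolding N_def by blast
qed


lemma main_cong:
  assumes n: "odd n"
  shows "rf_cong (\<Sum>k<n. qp qvar (qvar^2) k ^ 2 * YY (qvar^2) k) (ww (qvar^2) (n div 2)) ((cyclotomic n)^2)"
proof -
  define N where "N = n div 2"
  define tt where "tt k = qp qvar (qvar^2) k ^ 2 * YY (qvar^2) k" for k
  define Zf where "Zf k = (SOME Z. pint (cyclotomic n) Z \<and> tt k - FF (qvar^2) N k = rf_of_poly ((cyclotomic n)^2) * Z)" for k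
  have Zf: "pint (cyclotomic n) (Zf k) \<and> tt k - FF (qvar^2) N k = rf_of_poly ((cyclotomic n)^2) * Zf k" if "k < n" for k
    unfolding Zf_def by (rule someI_ex) (use term_diff[OF n that] in \<open>simp add: tt_def N_def\<close>)
  have Nn: "N < n" unfolding N_def using n by (cases n) auto
  have sF: "(\<Sum>k<n. FF (qvar^2) N k) = ww (qvar^2) N" using sum_FF_q[OF Nn] ss_ww_q by simp
  have "(\<Sum>k<n. tt k) - ww (qvar^2) N = (\<Sum>k<n. tt k - FF (qvar^2) N k)"
    unfolding sF[symmetric] by (simp add: sum_subtractf)
  also have "\<dots> = (\<Sum>k<n. rf_of_poly ((cyclotomic n)^2) * Zf k)" using Zf by (intro sum.cong) auto
  also have "\<dots> = rf_of_poly ((cyclotomic n)^2) * (\<Sum>k<n. Zf k)" by (simp add: sum_distrib_left)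
  finally have eq: "(\<Sum>k<n. tt k) - ww (qvar^2) N = rf_of_poly ((cyclotomic n)^2) * (\<Sum>k<n. Zf k)" .
  have "pint ((cyclotomic n)^2) (\<Sum>k<n. Zf k)" using Zf by (intro pint_sq pint_sum) auto
  then show ?thesis using rf_cong_intro[OF eq] unfolding tt_def N_def by simp
qed

lemma summand_eq:
  "qpoch qvar (qvar^2) k ^ 2 * qpoch (qvar^2) (qvar^4) k
       / (qpoch (qvar^2) (qvar^2) k ^ 2 * qpoch (qvar^4) (qvar^4) k) * qvar ^ (2 * k)
   = qp qvar (qvar^2) k ^ 2 * YY (qvar^2) k"
proof -
  have e4: "qvar^4 = (qvar^2)^2" by (simp add: power_mult[symmetric])
  have e2: "qvar^(2*k) = (qvar^2)^k" by (simp add: power_mult)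
  show ?thesis unfolding qpoch_qp YY_def e4 e2 by (simp add: mult_ac times_divide_eq_left times_divide_eq_right)
qed

theorem theorem2:
  fixes n :: nat
  assumes "n > 0"
  shows "(n mod 4 = 1 \<longrightarrow>
           rf_cong
             (\<Sum>k<n. qpoch qvar (qvar^2) k ^ 2 * qpoch (qvar^2) (qvar^4) k
                     / (qpoch (qvar^2) (qvar^2) k ^ 2 * qpoch (qvar^4) (qvar^4) k)
                     * qvar ^ (2 * k))
             (qvar ^ ((n - 1) div 2) * qpoch (qvar^2) (qvar^4) ((n - 1) div 4) ^ 2
                / qpoch (qvar^4) (qvar^4) ((n - 1) div 4) ^ 2)
             ((cyclotomic n)^2))
       \<and> (n mod 4 = 3 \<longrightarrow>
           rf_cong
             (\<Sum>k<n. qpoch qvar (qvar^2) k ^ 2 * qpoch (qvar^2) (qvar^4) k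
                     / (qpoch (qvar^2) (qvar^2) k ^ 2 * qpoch (qvar^4) (qvar^4) k)
                     * qvar ^ (2 * k))
             0
             ((cyclotomic n)^2))"
proof -
  let ?T = "\<lambda>k. qpoch qvar (qvar^2) k ^ 2 * qpoch (qvar^2) (qvar^4) k
                     / (qpoch (qvar^2) (qvar^2) k ^ 2 * qpoch (qvar^4) (qvar^4) k)
                     * qvar ^ (2 * k)"
  have S: "(\<Sum>k<n. ?T k) = (\<Sum>k<n. qp qvar (qvar^2) k ^ 2 * YY (qvar^2) k)"
    by (simp only: summand_eq)
  define N where "N = n div 2"
  have e4: "qvar^4 = (qvar^2)^2" by (simp add: power_mult[symmetric])
  show ?thesis
  proof (intro conjI impI)
    assume h: "n mod 4 = 1"
    have "n = 4 * (n div 4) + 1" using h div_mult_mod_eq[of n 4] by linarith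
    then obtain m where m: "n = 4 * m + 1" by blast
    have odd: "odd n" unfolding m by simp
    have N2: "(n - 1) div 2 = N" "(n - 1) div 4 = N div 2" "even N" unfolding N_def m by simp_all
    have pw: "qvar ^ N = (qvar^2) ^ (N div 2)" using N2(3) by (simp add: power_mult[symmetric])
    have R: "qvar ^ ((n - 1) div 2) * qpoch (qvar^2) (qvar^4) ((n - 1) div 4) ^ 2
                / qpoch (qvar^4) (qvar^4) ((n - 1) div 4) ^ 2 = ww (qvar^2) N"
      unfolding N2(1,2) ww_def qpoch_qp e4 pw using N2(3) by simp
    show "rf_cong (\<Sum>k<n. ?T k) (qvar ^ ((n - 1) div 2) * qpoch (qvar^2) (qvar^4) ((n - 1) div 4) ^ 2
                / qpoch (qvar^4) (qvar^4) ((n - 1) div 4) ^ 2) ((cyclotomic n)^2)"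
      unfolding S R N_def by (rule main_cong[OF odd])
  next
    assume h: "n mod 4 = 3"
    have "n = 4 * (n div 4) + 3" using h div_mult_mod_eq[of n 4] by linarith
    then obtain m where m: "n = 4 * m + 3" by blast
    have odd: "odd n" unfolding m by simp
    have "N = 2*m+1" unfolding N_def m by simp
    then have "odd N" by simp
    then have R: "ww (qvar^2) N = 0" by (simp add: ww_def)
    show "rf_cong (\<Sum>k<n. ?T k) 0 ((cyclotomic n)^2)"
      using main_cong[OF odd] unfolding S R[unfolded N_def, symmetric] .
  qed
qed


end
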